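(* Let $P$ be a finite poset, $R$ a commutative unital ring, and $D$ a derivation of $I^3(P,R)$. Then for all $x<y$ in $P$, $D(e_{xxy})=D(e_{xyy})=0$.
   Context: For a finite poset $P$, $P^3_\le=\{(x,y,z)\in P^3: x\le y\le z\}$, and $I^3(P,R)$ is the $R$-module of functions $f:P^3_\le\to R$ with multiplication $(fg)(x_1,x_2,x_3)=\sum f(x_1,y_1,y_2)g(y_1,y_2,x_3)$ over all $x_1\le y_1\le x_2\le y_2\le x_3$. For $x\le y\le z$, $e_{xyz}$ is the function equal to $1$ at $(x,y,z)$ and $0$ elsewhere. A derivation is an $R$-linear map $D:I^3(P,R)\to I^3(P,R)$ with $D(fg)=D(f)g+fD(g)$. *)

theory Defs
  imports Main
begin

text \<open>The finite poset P is the type 'a (class finite, order); elements of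
  I^3(P,R) are functions 'a => 'a => 'a => 'r vanishing outside P^3_le.\<close>

definition I3 :: "('a::{finite,order} \<Rightarrow> 'a \<Rightarrow> 'a \<Rightarrow> 'r::comm_ring_1) set" where
  "I3 = {f. \<forall>x y z. \<not> (x \<le> y \<and> y \<le> z) \<longrightarrow> f x y z = 0}"

definition mult3 :: "('a::{finite,order} \<Rightarrow> 'a \<Rightarrow> 'a \<Rightarrow> 'r::comm_ring_1)
    \<Rightarrow> ('a \<Rightarrow> 'a \<Rightarrow> 'a \<Rightarrow> 'r) \<Rightarrow> ('a \<Rightarrow> 'a \<Rightarrow> 'a \<Rightarrow> 'r)" where
  "mult3 f g = (\<lambda>x1 x2 x3.
     \<Sum>(y1, y2) \<in> {(y1, y2). x1 \<le> y1 \<and> y1 \<le> x2 \<and> x2 \<le> y2 \<and> y2 \<le> x3}.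
        f x1 y1 y2 * g y1 y2 x3)"

definition e3 :: "'a::{finite,order} \<Rightarrow> 'a \<Rightarrow> 'a \<Rightarrow> ('a \<Rightarrow> 'a \<Rightarrow> 'a \<Rightarrow> 'r::comm_ring_1)" where
  "e3 x y z = (\<lambda>a b c. if a = x \<and> b = y \<and> c = z then 1 else 0)"

definition is_derivation3 ::
  "(('a::{finite,order} \<Rightarrow> 'a \<Rightarrow> 'a \<Rightarrow> 'r::comm_ring_1) \<Rightarrow> ('a \<Rightarrow> 'a \<Rightarrow> 'a \<Rightarrow> 'r)) \<Rightarrow> bool" where
  "is_derivation3 D \<longleftrightarrow>
     (\<forall>f \<in> I3. D f \<in> I3) \<and>
     (\<forall>f \<in> I3. \<forall>g \<in> I3. D (\<lambda>a b c. f a b c + g a b c) = (\<lambda>a b c. D f a b c + D g a b c)) \<and>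
     (\<forall>r. \<forall>f \<in> I3. D (\<lambda>a b c. r * f a b c) = (\<lambda>a b c. r * D f a b c)) \<and>
     (\<forall>f \<in> I3. \<forall>g \<in> I3. D (mult3 f g) =
         (\<lambda>a b c. mult3 (D f) g a b c + mult3 f (D g) a b c))"

end

theory Submission
  imports Defs
begin

lemma multL:
  "mult3 (e3 a b c) g p q r = (if p = a \<and> a \<le> b \<and> b \<le> q \<and> q \<le> c \<and> c \<le> r then g b c r else (0::'r::comm_ring_1))"
proof -
  let ?S = "{(y1, y2). p \<le> y1 \<and> y1 \<le> q \<and> q \<le> y2 \<and> y2 \<le> (r::'a::{finite,order})}"
  have "mult3 (e3 a b c) g p q r = (\<Sum>z\<in>?S. if z = (b,c) then (if p = a then g b c r else 0) else 0)"
    unfolding mult3_def e3_def by (rule sum.cong) (auto split: if_splits)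
  also have "\<dots> = (if (b,c) \<in> ?S then (if p = a then g b c r else 0) else 0)"
    by (rule sum.delta) simp
  finally show ?thesis by auto
qed

lemma multR:
  "mult3 f (e3 b c d) p q r = (if r = d \<and> p \<le> b \<and> b \<le> q \<and> q \<le> c \<and> c \<le> d then f p b c else (0::'r::comm_ring_1))"
proof -
  let ?S = "{(y1, y2). p \<le> y1 \<and> y1 \<le> q \<and> q \<le> y2 \<and> y2 \<le> (r::'a::{finite,order})}"
  have "mult3 f (e3 b c d) p q r = (\<Sum>z\<in>?S. if z = (b,c) then (if r = d then f p b c else 0) else 0)"
    unfolding mult3_def e3_def by (rule sum.cong) (auto split: if_splits)
  also have "\<dots> = (if (b,c) \<in> ?S then (if r = d then f p b c else 0) else 0)"
    by (rule sum.delta) simp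
  finally show ?thesis by auto
qed

lemma e3_I3: "a \<le> b \<Longrightarrow> b \<le> c \<Longrightarrow> e3 a b c \<in> I3"
  unfolding I3_def e3_def by auto

lemma mult3_I3: "mult3 f g \<in> I3"
  unfolding I3_def mult3_def
  by (auto intro!: sum.neutral dest: order_trans)

lemma I3_zero: "f \<in> I3 \<Longrightarrow> \<not> (x \<le> y \<and> y \<le> z) \<Longrightarrow> f x y z = 0"
  unfolding I3_def by auto

lemma mult3_zero_left: "mult3 (\<lambda>_ _ _. 0) g = (\<lambda>_ _ _. (0::'r::comm_ring_1))"
  unfolding mult3_def by simp

lemma mult3_zero_right: "mult3 f (\<lambda>_ _ _. 0) = (\<lambda>_ _ _. (0::'r::comm_ring_1))"
  unfolding mult3_def by simp


lemma Dprod: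
  assumes "is_derivation3 D" "f \<in> I3" "g \<in> I3"
  shows "D (mult3 f g) p q r = mult3 (D f) g p q r + mult3 f (D g) p q r"
  using assms unfolding is_derivation3_def by simp

lemma DI3: "is_derivation3 D \<Longrightarrow> f \<in> I3 \<Longrightarrow> D f \<in> I3"
  unfolding is_derivation3_def by simp

lemma D0:
  assumes "is_derivation3 (D :: ('a::{finite,order} \<Rightarrow> 'a \<Rightarrow> 'a \<Rightarrow> 'r::comm_ring_1) \<Rightarrow> _)"
  shows "D (\<lambda>_ _ _. 0) = (\<lambda>_ _ _. 0)"
proof -
  have z: "(\<lambda>_ _ _. 0) \<in> (I3 :: ('a \<Rightarrow> 'a \<Rightarrow> 'a \<Rightarrow> 'r) set)" unfolding I3_def by simp
  have h: "D (\<lambda>a b c. s * f a b c) = (\<lambda>a b c. s * D f a b c)" if "f \<in> I3" for s f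
    using assms that unfolding is_derivation3_def by blast
  show ?thesis using h[OF z, of 0] by simp
qed

lemma Dzp:
  assumes "is_derivation3 D" "f \<in> I3" "g \<in> I3" "mult3 f g = (\<lambda>_ _ _. 0)"
  shows "mult3 (D f) g p q r + mult3 f (D g) p q r = 0"
  using Dprod[OF assms(1-3), of p q r] assms(4) D0[OF assms(1)] by simp

lemma D_idem:
  assumes D: "is_derivation3 D"
  shows "D (e3 z z z) = (\<lambda>_ _ _. 0)"
proof -
  define F where "F = D (e3 z z z)"
  have ez: "e3 z z z \<in> I3" by (rule e3_I3) auto
  have FI: "F \<in> I3" unfolding F_def by (rule DI3[OF D ez])
  have idem: "mult3 (e3 z z z) (e3 z z z) = e3 z z z"
    by (simp only: fun_eq_iff multL) (auto simp: e3_def)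
  have F1: "F p q r = (if r = z \<and> p \<le> z \<and> q = z then F p z z else 0)
      + (if p = z \<and> q = z \<and> z \<le> r then F z z r else 0)" for p q r
    using Dprod[OF D ez ez, of p q r] unfolding idem F_def[symmetric]
    by (auto simp: multL multR)
  have Fz: "F z z z = 0" using F1[of z z z] by simp
  have Fp: "F p z z = 0" if "p < z" for p
  proof -
    have e1: "e3 p p z \<in> I3" by (rule e3_I3) (use that in auto)
    have "mult3 (e3 p p z) (e3 z z z) = (\<lambda>_ _ _. 0)"
      using that by (simp only: fun_eq_iff multL) (auto simp: e3_def)
    from Dzp[OF D e1 ez this, of p p z] that show ?thesis
      by (auto simp: multL multR F_def less_le_not_le)
  qed
  have Fr: "F z z r = 0" if "z < r" for r
  proof -
    have e1: "e3 z r r \<in> I3" by (rule e3_I3) (use that in auto)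
    have "mult3 (e3 z z z) (e3 z r r) = (\<lambda>_ _ _. 0)"
      using that by (simp only: fun_eq_iff multL) (auto simp: e3_def)
    from Dzp[OF D ez e1 this, of z r r] that show ?thesis
      by (auto simp: multL multR F_def less_le_not_le)
  qed
  have "F p q r = 0" for p q r
  proof -
    have a: "F p z z = 0" if "p \<le> z" using that Fz Fp by (cases "p = z") auto
    have b: "F p z z = 0" if "\<not> p \<le> z" using that I3_zero[OF FI] by blast
    have c: "F z z r = 0" if "z \<le> r" using that Fz Fr by (cases "r = z") auto
    have d: "F z z r = 0" if "\<not> z \<le> r" using that I3_zero[OF FI] by blast
    show ?thesis using F1[of p q r] a b c d by auto
  qed
  then show ?thesis unfolding F_def by (simp add: fun_eq_iff)
qed

theorem lemma4p5:
  fixes D :: "('a::{finite,order} \<Rightarrow> 'a \<Rightarrow> 'a \<Rightarrow> 'r::comm_ring_1) \<Rightarrow> ('a \<Rightarrow> 'a \<Rightarrow> 'a \<Rightarrow> 'r)"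
    and x y :: 'a
  assumes "is_derivation3 D"
    and "x < y"
  shows "D (e3 x x y) = (\<lambda>_ _ _. 0) \<and> D (e3 x y y) = (\<lambda>_ _ _. 0)"
proof -
  note D = assms(1)
  have xy: "x \<le> y" "x \<noteq> y" using assms(2) by auto
  define G where "G = D (e3 x x y)"
  define H where "H = D (e3 x y y)"
  define S where "S = mult3 (e3 x x y) (e3 x y y :: 'a \<Rightarrow> 'a \<Rightarrow> 'a \<Rightarrow> 'r)"
  have exx: "(e3 x x x :: 'a \<Rightarrow> 'a \<Rightarrow> 'a \<Rightarrow> 'r) \<in> I3" by (rule e3_I3) auto
  have exy: "(e3 x x y :: 'a \<Rightarrow> 'a \<Rightarrow> 'a \<Rightarrow> 'r) \<in> I3" by (rule e3_I3) (use xy in auto)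
  have eyy: "(e3 x y y :: 'a \<Rightarrow> 'a \<Rightarrow> 'a \<Rightarrow> 'r) \<in> I3" by (rule e3_I3) (use xy in auto)
  have eY: "(e3 y y y :: 'a \<Rightarrow> 'a \<Rightarrow> 'a \<Rightarrow> 'r) \<in> I3" by (rule e3_I3) auto
  have SI: "S \<in> I3" unfolding S_def by (rule mult3_I3)
  have GI: "G \<in> I3" unfolding G_def by (rule DI3[OF D exy])
  have HI: "H \<in> I3" unfolding H_def by (rule DI3[OF D eyy])
  have Dx: "D (e3 x x x) = (\<lambda>_ _ _. 0)" by (rule D_idem[OF D])
  have Dy: "D (e3 y y y) = (\<lambda>_ _ _. 0)" by (rule D_idem[OF D])
  have m1: "mult3 (e3 x x x) (e3 x x y) = (e3 x x y :: 'a \<Rightarrow> 'a \<Rightarrow> 'a \<Rightarrow> 'r)"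
    using xy by (simp only: fun_eq_iff multL) (auto simp: e3_def)
  have G1: "G p q r = (if p = x \<and> q = x \<and> x \<le> r then G x x r else 0)" for p q r
    using Dprod[OF D exx exy, of p q r] unfolding m1 G_def[symmetric] Dx mult3_zero_left
    by (auto simp: multL intro: antisym)
  have Gr: "G x x r = 0" if "r \<noteq> y" "x \<le> r" for r
  proof -
    have e1: "(e3 x r r :: 'a \<Rightarrow> 'a \<Rightarrow> 'a \<Rightarrow> 'r) \<in> I3" by (rule e3_I3) (use that in auto)
    have "mult3 (e3 x x y) (e3 x r r) = (\<lambda>_ _ _. 0::'r)"
      using that by (simp only: fun_eq_iff multL) (auto simp: e3_def)
    moreover have nr: "r \<le> y \<Longrightarrow> \<not> y \<le> r" using that antisym[of r y] by blast
    ultimately show ?thesis using Dzp[OF D exy e1, of x r r] that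
      by (cases "r \<le> y \<and> y \<le> r") (simp_all add: multL multR G_def nr)
  qed
  have SeY: "mult3 S (e3 y y y) = e3 x y y"
    using xy by (simp only: fun_eq_iff multR S_def multL) (auto simp: e3_def intro: antisym)
  have eS: "mult3 (e3 x x x) S = e3 x x y"
    using xy by (simp only: fun_eq_iff multL S_def multR) (auto simp: e3_def intro: antisym)
  have DS: "D S p q r = mult3 G (e3 x y y) p q r + mult3 (e3 x x y) H p q r" for p q r
    unfolding S_def G_def H_def by (rule Dprod[OF D exy eyy])
  have "H x y y = D S x y y"
    using Dprod[OF D SI eY, of x y y] unfolding SeY H_def[symmetric] Dy mult3_zero_right
    using xy by (simp add: multR)
  also have "\<dots> = G x x y + H x y y" using DS[of x y y] xy by (simp add: multL multR)
  finally have Gxy: "G x x y = 0" by simp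
  have "G x x y = D S x x y"
    using Dprod[OF D exx SI, of x x y] unfolding eS G_def[symmetric] Dx mult3_zero_left
    using xy by (simp add: multL)
  also have "\<dots> = G x x y + H x y y" using DS[of x x y] xy by (simp add: multL multR)
  finally have Hxy: "H x y y = 0" using Gxy by simp
  have G0: "G = (\<lambda>_ _ _. 0)"
  proof (intro ext)
    fix p q r
    show "G p q r = 0" using G1[of p q r] Gr[of r] Gxy by (cases "r = y") auto
  qed
  have m2: "mult3 (e3 x y y) (e3 y y y) = (e3 x y y :: 'a \<Rightarrow> 'a \<Rightarrow> 'a \<Rightarrow> 'r)"
    using xy by (simp only: fun_eq_iff multR) (auto simp: e3_def intro: antisym)
  have H1: "H p q r = (if r = y \<and> p \<le> y \<and> q = y then H p y y else 0)" for p q r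
    using Dprod[OF D eyy eY, of p q r] unfolding m2 H_def[symmetric] Dy mult3_zero_right
    by (auto simp: multR intro: antisym)
  have Hp: "H p y y = 0" if "p \<noteq> x" "p \<le> y" for p
  proof -
    have e1: "(e3 p p y :: 'a \<Rightarrow> 'a \<Rightarrow> 'a \<Rightarrow> 'r) \<in> I3" by (rule e3_I3) (use that in auto)
    have "mult3 (e3 p p y) (e3 x y y) = (\<lambda>_ _ _. 0::'r)"
      using that by (simp only: fun_eq_iff multL) (auto simp: e3_def)
    moreover have nr: "p \<le> x \<Longrightarrow> \<not> x \<le> p" using that antisym[of p x] by blast
    ultimately show ?thesis using Dzp[OF D e1 eyy, of p p y] that
      by (cases "p \<le> x \<and> x \<le> p") (simp_all add: multL multR H_def nr)
  qed
  have H0: "H = (\<lambda>_ _ _. 0)"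
  proof (intro ext)
    fix p q r
    show "H p q r = 0" using H1[of p q r] Hp[of p] Hxy by (cases "p = x") auto
  qed
  show ?thesis using G0 H0 unfolding G_def H_def by simp
qed

end
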